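(* Let $v\in\mathbb R^3$ with $|v|=1$ and let $\phi,\psi,\rho>0$. Let $P=\begin{bmatrix}P_{aa}&P_{ab}\\ P_{ab}^T&P_{bb}\end{bmatrix}$ be a $6\times6$ matrix with $P_{aa}=\phi I$, $P_{ab}=-\psi I$ and $P_{bb}$ arbitrary, let $R=\rho I$, and let $H=\begin{bmatrix}[v\times] & 0\end{bmatrix}$ ($3\times6$). Then $HPH^T+R$ is invertible and the Kalman gain $K=PH^T(HPH^T+R)^{-1}$ equals $$K=\frac{1}{1+\rho/\phi}\begin{bmatrix}I\\ -(\psi/\phi)I\end{bmatrix}[v\times]^T.$$ Consequently, for every $\xi\in\mathbb R^3$, $$K(\xi-v)=\frac{1}{1+\rho/\phi}\begin{bmatrix}\xi\times v\\ -(\psi/\phi)\,(\xi\times v)\end{bmatrix},$$ i.e. the EKF update $[\delta a;\delta b]=K(\xi-v)$ coincides with the complementary-filter update $\delta a=w_a\,(\xi\times v)$, $\delta b=-w_b\,\delta a$ with $w_a=\frac{1}{1+\rho/\phi}$ and $w_b=\psi/\phi$.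
   Context: $[v\times]$ denotes the $3\times3$ skew-symmetric matrix with $[v\times]w=v\times w$. $I$ is the $3\times3$ identity. *)

theory Defs
  imports "HOL-Analysis.Analysis"
begin

definition skew :: "real^3 \<Rightarrow> real^3^3" where
  "skew v = matrix (\<lambda>w. cross3 v w)"

text \<open>Vectors/matrices indexed by a sum type ('n + 'm) model block structure:
  Inl indices form the first block, Inr indices the second.\<close>

definition blockmat :: "real^'b^'a \<Rightarrow> real^'d^'a \<Rightarrow> real^'b^'c \<Rightarrow> real^'d^'c
      \<Rightarrow> real^('b + 'd)^('a + 'c)" where
  "blockmat A B C D = (\<chi> i j. case i of
      Inl a \<Rightarrow> (case j of Inl b \<Rightarrow> A $ a $ b | Inr d \<Rightarrow> B $ a $ d)
    | Inr c \<Rightarrow> (case j of Inl b \<Rightarrow> C $ c $ b | Inr d \<Rightarrow> D $ c $ d))"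

definition hblock :: "real^'b^'a \<Rightarrow> real^'d^'a \<Rightarrow> real^('b + 'd)^'a" where
  "hblock A B = (\<chi> i j. case j of Inl b \<Rightarrow> A $ i $ b | Inr d \<Rightarrow> B $ i $ d)"

definition vblock :: "real^'b^'a \<Rightarrow> real^'b^'c \<Rightarrow> real^'b^('a + 'c)" where
  "vblock A C = (\<chi> i j. case i of Inl a \<Rightarrow> A $ a $ j | Inr c \<Rightarrow> C $ c $ j)"

definition vstack :: "real^'a \<Rightarrow> real^'c \<Rightarrow> real^('a + 'c)" where
  "vstack x y = (\<chi> i. case i of Inl a \<Rightarrow> x $ a | Inr c \<Rightarrow> y $ c)"

end

theory Submission imports Defs begin

lemma sum_p33: "sum f (UNIV::(3+3) set) = sum (\<lambda>a. f (Inl a)) UNIV + sum (\<lambda>b. f (Inr b)) UNIV"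
proof -
  have "sum f (UNIV::(3+3) set) = sum f (range Inl \<union> range Inr)"
    by (metis UNIV_sum)
  also have "\<dots> = sum f (range Inl) + sum f (range Inr)"
    by (rule sum.union_disjoint) auto
  also have "\<dots> = sum (\<lambda>a. f (Inl a)) UNIV + sum (\<lambda>b. f (Inr b)) UNIV"
    by (simp add: sum.reindex)
  finally show ?thesis .
qed

lemma skew_nth: "skew v $ i $ j = cross3 v (axis j 1) $ i"
  by (simp add: skew_def matrix_def)

lemma skew_explicit: "skew v = (\<chi> i j. if i = 1 then (if j = 1 then 0 else if j = 2 then - v$3 else v$2)
   else if i = 2 then (if j = 1 then v$3 else if j = 2 then 0 else - v$1)
   else (if j = 1 then - v$2 else if j = 2 then v$1 else 0))"
  unfolding vec_eq_iff skew_nth forall_3 by (simp add: cross3_def axis_def)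

lemma forall_p33: "(\<forall>i::3+3. P i) \<longleftrightarrow> (\<forall>a. P (Inl a)) \<and> (\<forall>b. P (Inr b))"
  by (metis sum.exhaust)

lemma M_eq:
  fixes v :: "real^3"
  assumes hn: "v$1^2+v$2^2+v$3^2 = 1"
  shows "hblock (skew v) 0 ** blockmat (\<phi> *\<^sub>R mat 1) (- \<psi> *\<^sub>R mat 1)
                      (transpose (- \<psi> *\<^sub>R mat 1)) Pbb ** transpose (hblock (skew v) 0) + \<rho> *\<^sub>R mat 1
   = (\<chi> i j. (if i = j then \<phi> + \<rho> else 0) - \<phi> * v$i * v$j)"
  unfolding vec_eq_iff forall_3
  apply (simp add: matrix_matrix_mult_def sum_p33 sum_3 blockmat_def hblock_def skew_explicit transpose_def mat_def)
  using hn by (auto simp: algebra_simps power2_eq_square) (metis distrib_left mult.right_neutral)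

lemma MN:
  fixes v :: "real^3"
  assumes hn: "v$1^2+v$2^2+v$3^2 = 1" and ha: "a * (\<phi> + \<rho>) = 1" and hc: "\<rho> * c = \<phi> * a"
  shows "(\<chi> i j. (if i = j then \<phi> + \<rho> else 0) - \<phi> * v$i * v$j) ** 
         (\<chi> i j. (if i = j then a else 0) + c * v$i * v$j) = (mat 1 :: real^3^3)"
  unfolding vec_eq_iff forall_3
  apply (simp add: matrix_matrix_mult_def sum_3 mat_def)
  using hn ha hc apply (auto simp: algebra_simps power2_eq_square)
  by algebra+

lemma K_eq:
  fixes v :: "real^3"
  assumes hn: "v$1^2+v$2^2+v$3^2 = 1" and ha: "a * (\<phi> + \<rho>) = 1" and hc: "\<rho> * c = \<phi> * a"
   and hs: "s = \<phi> * a" and hq: "s * q = \<psi> * a"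
  shows "blockmat (\<phi> *\<^sub>R mat 1) (- \<psi> *\<^sub>R mat 1)
                      (transpose (- \<psi> *\<^sub>R mat 1)) Pbb ** transpose (hblock (skew v) 0) **
         (\<chi> i j. (if i = j then a else 0) + c * v$i * v$j) = 
     s *\<^sub>R (vblock (mat 1) (- q *\<^sub>R mat 1) ** transpose (skew v))"
  unfolding vec_eq_iff forall_3 forall_p33
  apply (simp add: matrix_matrix_mult_def sum_p33 sum_3 blockmat_def hblock_def vblock_def skew_explicit transpose_def mat_def)
  using hn ha hc hs hq by (auto simp: algebra_simps power2_eq_square)

lemma Kv:
  fixes v :: "real^3"
  shows "(s *\<^sub>R (vblock (mat 1) (- q *\<^sub>R mat 1) ** transpose (skew v))) *v (\<xi> - v) =
     s *\<^sub>R vstack (cross3 \<xi> v) (- q *\<^sub>R cross3 \<xi> v)"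
  unfolding vec_eq_iff forall_3 forall_p33
  by (simp add: matrix_matrix_mult_def matrix_vector_mult_def sum_3 vblock_def vstack_def skew_explicit transpose_def mat_def cross3_def algebra_simps)

theorem mainTheorem9:
  fixes v :: "real^3" and \<phi> \<psi> \<rho> :: real
    and Pbb :: "real^3^3" and P :: "real^(3+3)^(3+3)"
    and H :: "real^(3+3)^3" and R :: "real^3^3"
  assumes "norm v = 1"
    and "\<phi> > 0" and "\<psi> > 0" and "\<rho> > 0"
    and "P = blockmat (\<phi> *\<^sub>R mat 1) (- \<psi> *\<^sub>R mat 1)
                      (transpose (- \<psi> *\<^sub>R mat 1)) Pbb"
    and "R = \<rho> *\<^sub>R mat 1"
    and "H = hblock (skew v) 0"
  shows "invertible (H ** P ** transpose H + R) \<and>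
    (let K = P ** transpose H ** matrix_inv (H ** P ** transpose H + R)
     in K = (1 / (1 + \<rho> / \<phi>)) *\<^sub>R
              (vblock (mat 1) (- (\<psi> / \<phi>) *\<^sub>R mat 1) ** transpose (skew v))
      \<and> (\<forall>\<xi> :: real^3. K *v (\<xi> - v) =
            (1 / (1 + \<rho> / \<phi>)) *\<^sub>R
              vstack (cross3 \<xi> v) (- (\<psi> / \<phi>) *\<^sub>R cross3 \<xi> v)))"
  proof -
  define a where "a = 1 / (\<phi> + \<rho>)"
  define c where "c = \<phi> / (\<rho> * (\<phi> + \<rho>))"
  define s where "s = 1 / (1 + \<rho> / \<phi>)"
  define q where "q = \<psi> / \<phi>"
  have p: "\<phi> > 0" "\<rho> > 0" using assms by auto
  have ha: "a * (\<phi> + \<rho>) = 1" using p by (simp add: a_def)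
  have hc: "\<rho> * c = \<phi> * a" using p by (simp add: a_def c_def)
  have hs: "s = \<phi> * a" using p by (simp add: a_def s_def field_simps)
  have hq: "s * q = \<psi> * a" using p by (simp add: hs q_def)
  have "inner v v = 1" using assms(1) by (simp add: power2_norm_eq_inner[symmetric])
  hence hn: "v$1^2+v$2^2+v$3^2 = 1" by (simp add: inner_vec_def sum_3 power2_eq_square)
  define M0 :: "real^3^3" where "M0 = (\<chi> i j. (if i = j then \<phi> + \<rho> else 0) - \<phi> * v$i * v$j)"
  define N :: "real^3^3" where "N = (\<chi> i j. (if i = j then a else 0) + c * v$i * v$j)"
  have M: "H ** P ** transpose H + R = M0"
    unfolding assms(5,6,7) M0_def by (rule M_eq[OF hn])
  have MN: "M0 ** N = mat 1" unfolding M0_def N_def by (rule MN[OF hn ha hc])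
  hence NM: "N ** M0 = mat 1" by (simp add: matrix_left_right_inverse)
  have inv: "invertible M0" using MN NM invertible_def by blast
  have "M0 ** matrix_inv M0 = mat 1 \<and> matrix_inv M0 ** M0 = mat 1"
    unfolding matrix_inv_def by (rule someI[of _ N]) (use MN NM in blast)
  hence MI: "matrix_inv M0 = N"
    by (metis MN matrix_mul_assoc matrix_mul_lid)
  have K: "P ** transpose H ** matrix_inv (H ** P ** transpose H + R) =
     s *\<^sub>R (vblock (mat 1) (- q *\<^sub>R mat 1) ** transpose (skew v))"
    unfolding M MI unfolding N_def assms(5,7) by (rule K_eq[OF hn ha hc hs hq])
  show ?thesis
    using K inv Kv[of s q v] unfolding Let_def M s_def q_def by simp
qed

end
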